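(* Let $a=\{a_1,\ldots,a_n\}$ be a list of positive integers. For $\epsilon\in\mathbb{R}$ define the quartic form in $x\in\mathbb{R}^n$ $$q^h_{a,\epsilon}(x):=\sum_i x_i^4+\Big(\big(\sum_i a_ix_i\big)^2-2\sum_i x_i^2\Big)\Big(\frac1n\sum_i x_i^2\Big)+(n-\epsilon)\Big(\frac1n\sum_i x_i^2\Big)^2,$$ equivalently $q^h_{a,\epsilon}(x)=p_a\!\left(x/(\frac1n\sum_i x_i^2)^{1/2}\right)(\frac1n\sum_i x_i^2)^2-\epsilon(\frac1n\sum_i x_i^2)^2$ where $p_a(x)=\sum_i(x_i^2-1)^2+(\sum_i a_ix_i)^2$. Then the partition instance $a$ is infeasible if and only if there exists $\epsilon>0$ for which $q^h_{a,\epsilon}(x)\ge 0$ for all $x\in\mathbb{R}^n$.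
   Context: A partition instance $a_1,\ldots,a_n$ (positive integers) is feasible if the index set $\{1,\ldots,n\}$ can be split into two sets $S_1,S_2$ with $\sum_{i\in S_1}a_i=\sum_{i\in S_2}a_i$, and infeasible otherwise. *)

theory Defs
  imports Main Complex_Main
begin

definition partition_feasible :: "nat \<Rightarrow> (nat \<Rightarrow> int) \<Rightarrow> bool" where
  "partition_feasible n a \<longleftrightarrow>
     (\<exists>S1 S2. S1 \<union> S2 = {1..n} \<and> S1 \<inter> S2 = {} \<and>
        (\<Sum>i\<in>S1. a i) = (\<Sum>i\<in>S2. a i))"

definition qh :: "nat \<Rightarrow> (nat \<Rightarrow> int) \<Rightarrow> real \<Rightarrow> (nat \<Rightarrow> real) \<Rightarrow> real" where
  "qh n a eps x =
     (let m = (1 / real n) * (\<Sum>i=1..n. (x i)^2) in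
      (\<Sum>i=1..n. (x i)^4)
      + ((\<Sum>i=1..n. of_int (a i) * x i)^2 - 2 * (\<Sum>i=1..n. (x i)^2)) * m
      + (real n - eps) * m^2)"

end

theory Submission
  imports Defs
begin

lemma abs_sign_le:
  fixes y :: real
  shows "\<bar>y - (if y \<ge> 0 then 1 else -1)\<bar> \<le> \<bar>y^2 - 1\<bar>"
proof (cases "y \<ge> 0")
  case True
  have "\<bar>y^2 - 1\<bar> = \<bar>y - 1\<bar> * \<bar>y + 1\<bar>"
    by (simp add: power2_eq_square abs_mult[symmetric] algebra_simps)
  moreover have "\<bar>y + 1\<bar> \<ge> 1" using True by simp
  ultimately show ?thesis using True
    by (simp add: mult_le_cancel_left1)
next
  case False
  have "\<bar>y^2 - 1\<bar> = \<bar>y + 1\<bar> * \<bar>y - 1\<bar>"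
    by (simp add: power2_eq_square abs_mult[symmetric] algebra_simps)
  moreover have "\<bar>y + 1\<bar> * 1 \<le> \<bar>y + 1\<bar> * \<bar>y - 1\<bar>"
    by (rule mult_left_mono) (use False in auto)
  ultimately show ?thesis using False by simp
qed

lemma sum_split_sign:
  fixes n :: nat and a :: "nat \<Rightarrow> int" and P :: "nat \<Rightarrow> bool"
  shows "(\<Sum>i=1..n. a i * (if P i then 1 else -1)) =
         (\<Sum>i\<in>{i\<in>{1..n}. P i}. a i) - (\<Sum>i\<in>{i\<in>{1..n}. \<not> P i}. a i)"
proof -
  have "(\<Sum>i=1..n. a i * (if P i then 1 else -1)) = (\<Sum>i=1..n. (if P i then a i else - a i))"
    by (rule sum.cong) auto
  also have "\<dots> = (\<Sum>i\<in>{1..n} \<inter> {i. P i}. a i) + (\<Sum>i\<in>{1..n} \<inter> - {i. P i}. - a i)"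
    by (rule sum.If_cases) simp
  also have "{1..n} \<inter> {i. P i} = {i\<in>{1..n}. P i}" by auto
  also have "{1..n} \<inter> - {i. P i} = {i\<in>{1..n}. \<not> P i}" by auto
  finally show ?thesis by (simp add: sum_negf)
qed

lemma key:
  fixes n :: nat and a :: "nat \<Rightarrow> int" and y :: "nat \<Rightarrow> real"
  assumes n: "n \<ge> 1" and pos: "\<forall>i\<in>{1..n}. a i > 0"
    and inf: "\<not> partition_feasible n a"
  defines "A \<equiv> real_of_int (\<Sum>i=1..n. a i)"
  shows "(\<Sum>i=1..n. (y i^2 - 1)^2) + (\<Sum>i=1..n. of_int (a i) * y i)^2 \<ge> 1 / (4 * A^2)"
proof -
  have A1: "A \<ge> 1"
  proof -
    have "a 1 \<le> (\<Sum>i=1..n. a i)"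
      using pos n by (intro member_le_sum) (auto intro: less_imp_le)
    moreover have "a 1 > 0" using pos n by auto
    ultimately show ?thesis unfolding A_def by linarith
  qed
  have Apos: "A > 0" using A1 by simp
  have dle: "1 / (4 * A^2) \<le> 1/4"
  proof -
    have "A^2 \<ge> 1" using A1 by (simp add: one_le_power)
    then have "1/(4*A^2) \<le> 1/(4*1)" by (intro divide_left_mono) auto
    then show ?thesis by simp
  qed
  have S0: "(\<Sum>i=1..n. (y i^2 - 1)^2) \<ge> 0" by (intro sum_nonneg) simp
  show ?thesis
  proof (cases "\<exists>i\<in>{1..n}. \<bar>y i^2 - 1\<bar> \<ge> 1 / (2*A)")
    case True
    then obtain i where i: "i \<in> {1..n}" "\<bar>y i^2 - 1\<bar> \<ge> 1/(2*A)" by blast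
    have "(1/(2*A))^2 \<le> \<bar>y i^2 - 1\<bar>^2"
      using i(2) Apos by (intro power_mono) auto
    then have "1/(4*A^2) \<le> (y i^2 - 1)^2" by (simp add: power_divide power_mult_distrib)
    also have "\<dots> \<le> (\<Sum>i=1..n. (y i^2 - 1)^2)"
      using i(1) by (intro member_le_sum) auto
    finally show ?thesis by (smt (verit) zero_le_power2)
  next
    case False
    then have small: "\<And>i. i \<in> {1..n} \<Longrightarrow> \<bar>y i^2 - 1\<bar> < 1/(2*A)" by force
    define s where "s i = (if y i \<ge> 0 then 1 else -1 :: int)" for i
    define K where "K = (\<Sum>i=1..n. a i * s i)"
    have "K = (\<Sum>i\<in>{i\<in>{1..n}. y i \<ge> 0}. a i) - (\<Sum>i\<in>{i\<in>{1..n}. \<not> y i \<ge> 0}. a i)"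
      unfolding K_def s_def by (rule sum_split_sign)
    moreover have "(\<Sum>i\<in>{i\<in>{1..n}. y i \<ge> 0}. a i) \<noteq> (\<Sum>i\<in>{i\<in>{1..n}. \<not> y i \<ge> 0}. a i)"
    proof
      assume eq: "(\<Sum>i\<in>{i\<in>{1..n}. y i \<ge> 0}. a i) = (\<Sum>i\<in>{i\<in>{1..n}. \<not> y i \<ge> 0}. a i)"
      have "{i\<in>{1..n}. y i \<ge> 0} \<union> {i\<in>{1..n}. \<not> y i \<ge> 0} = {1..n}" by auto
      moreover have "{i\<in>{1..n}. y i \<ge> 0} \<inter> {i\<in>{1..n}. \<not> y i \<ge> 0} = {}" by auto
      ultimately have "partition_feasible n a" unfolding partition_feasible_def using eq by blast
      then show False using inf by blast
    qed
    ultimately have "K \<noteq> 0" by simp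
    then have K1: "\<bar>real_of_int K\<bar> \<ge> 1" by linarith
    let ?L = "(\<Sum>i=1..n. of_int (a i) * y i)"
    have "?L - real_of_int K = (\<Sum>i=1..n. of_int (a i) * (y i - of_int (s i)))"
      unfolding K_def by (simp add: sum_subtractf algebra_simps)
    then have "\<bar>?L - real_of_int K\<bar> \<le> (\<Sum>i=1..n. \<bar>of_int (a i) * (y i - of_int (s i))\<bar>)"
      by (simp add: sum_abs)
    also have "\<dots> \<le> (\<Sum>i=1..n. of_int (a i) * \<bar>y i^2 - 1\<bar>)"
    proof (rule sum_mono)
      fix i assume i: "i \<in> {1..n}"
      have "\<bar>y i - of_int (s i)\<bar> \<le> \<bar>y i^2 - 1\<bar>"
        using abs_sign_le[of "y i"] unfolding s_def by (simp split: if_splits)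
      moreover have "(0::real) \<le> of_int (a i)" using pos i by (simp add: less_imp_le)
      ultimately show "\<bar>of_int (a i) * (y i - of_int (s i))\<bar> \<le> of_int (a i) * \<bar>y i^2 - 1\<bar>"
        by (simp add: abs_mult mult_left_mono)
    qed
    also have "\<dots> < (\<Sum>i=1..n. of_int (a i) * (1/(2*A)))"
    proof (rule sum_strict_mono)
      show "finite {1..n}" by simp
      show "{1..n} \<noteq> {}" using n by simp
      fix i assume i: "i \<in> {1..n}"
      show "of_int (a i) * \<bar>y i^2 - 1\<bar> < of_int (a i) * (1/(2*A))"
        using small[OF i] pos i by (intro mult_strict_left_mono) auto
    qed
    also have "\<dots> = A * (1/(2*A))" by (simp only: sum_distrib_right[symmetric] A_def of_int_sum)
    also have "\<dots> = 1/2" using Apos by simp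
    finally have "\<bar>?L - real_of_int K\<bar> < 1/2" .
    then have "\<bar>?L\<bar> \<ge> 1/2" using K1 by linarith
    then have "(1/2)^2 \<le> \<bar>?L\<bar>^2" by (intro power_mono) auto
    then have "?L^2 \<ge> 1/4" by (simp add: power2_eq_square)
    then show ?thesis using S0 dle by linarith
  qed
qed

theorem theorem5p3:
  fixes n :: nat and a :: "nat \<Rightarrow> int"
  assumes "n \<ge> 1"
    and "\<forall>i\<in>{1..n}. a i > 0"
  shows "\<not> partition_feasible n a \<longleftrightarrow> (\<exists>eps>0. \<forall>x. qh n a eps x \<ge> 0)"
proof
  assume inf: "\<not> partition_feasible n a"
  define A where "A = real_of_int (\<Sum>i=1..n. a i)"
  define d where "d = 1 / (4 * A^2)"
  have A1: "A \<ge> 1"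
  proof -
    have "a 1 \<le> (\<Sum>i=1..n. a i)"
      using assms by (intro member_le_sum) (auto intro: less_imp_le)
    moreover have "a 1 > 0" using assms by auto
    ultimately show ?thesis unfolding A_def by linarith
  qed
  have dpos: "d > 0" unfolding d_def using A1 by simp
  show "\<exists>eps>0. \<forall>x. qh n a eps x \<ge> 0"
  proof (intro exI conjI allI)
    show "d > 0" by (rule dpos)
    fix x :: "nat \<Rightarrow> real"
    define Q where "Q = (\<Sum>i=1..n. x i^2)"
    define m where "m = (1/real n) * Q"
    define L where "L = (\<Sum>i=1..n. of_int (a i) * x i)"
    define F where "F = (\<Sum>i=1..n. x i^4)"
    have qh_eq: "qh n a d x = F + (L^2 - 2*Q)*m + (real n - d)*m^2"
      unfolding qh_def Let_def Q_def m_def L_def F_def by simp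
    have Qnm: "Q = real n * m" unfolding m_def using assms(1) by simp
    have F0: "F \<ge> 0" unfolding F_def by (intro sum_nonneg) simp
    have m0: "m \<ge> 0" unfolding m_def Q_def by (intro mult_nonneg_nonneg sum_nonneg) auto
    show "qh n a d x \<ge> 0"
    proof (cases "m = 0")
      case True
      then show ?thesis using qh_eq F0 by simp
    next
      case False
      then have mpos: "m > 0" using m0 by simp
      define t where "t = sqrt m"
      have tpos: "t > 0" unfolding t_def using mpos by simp
      have tt: "t^2 = m" unfolding t_def using mpos by simp
      define y where "y i = x i / t" for i
      have k: "(\<Sum>i=1..n. (y i^2 - 1)^2) + (\<Sum>i=1..n. of_int (a i) * y i)^2 \<ge> d"
        unfolding d_def A_def by (rule key[OF assms inf])
      have e1: "(\<Sum>i=1..n. (y i^2 - 1)^2) = (\<Sum>i=1..n. (x i^2 - m)^2) / m^2"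
        unfolding sum_divide_distrib
      proof (rule sum.cong)
        fix i
        have "y i^2 = x i^2 / m" unfolding y_def using tt by (simp add: power_divide)
        then show "(y i^2 - 1)^2 = (x i^2 - m)^2 / m^2" using mpos
          by (simp add: power_divide[symmetric] diff_divide_distrib)
      qed simp
      have e2: "(\<Sum>i=1..n. (x i^2 - m)^2) = F - 2*m*Q + real n * m^2"
      proof -
        have "(\<Sum>i=1..n. (x i^2 - m)^2) = (\<Sum>i=1..n. x i^4 - 2*m*x i^2 + m^2)"
          by (rule sum.cong) (auto simp: power2_eq_square algebra_simps power4_eq_xxxx)
        also have "\<dots> = F - 2*m*Q + real n * m^2"
          unfolding F_def Q_def by (simp add: sum.distrib sum_subtractf sum_distrib_left)
        finally show ?thesis .
      qed
      have e3: "(\<Sum>i=1..n. of_int (a i) * y i) = L / t"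
        unfolding L_def y_def sum_divide_distrib by simp
      have e4: "(L/t)^2 = L^2 / m" using tt by (simp add: power_divide)
      have "d \<le> (F - 2*m*Q + real n * m^2) / m^2 + L^2 / m"
        using k e1 e2 e3 e4 by simp
      then have "d * m^2 \<le> ((F - 2*m*Q + real n * m^2) / m^2 + L^2 / m) * m^2"
        using mpos by (intro mult_right_mono) auto
      also have "\<dots> = F - 2*m*Q + real n * m^2 + L^2 * m"
        using mpos by (simp add: field_simps power2_eq_square)
      finally have "d * m^2 \<le> F - 2*m*Q + real n * m^2 + L^2 * m" .
      then show ?thesis unfolding qh_eq Qnm by (simp add: algebra_simps power2_eq_square)
    qed
  qed
next
  assume "\<exists>eps>0. \<forall>x. qh n a eps x \<ge> 0"
  then obtain eps where eps: "eps > 0" "\<And>x. qh n a eps x \<ge> 0" by blast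
  show "\<not> partition_feasible n a"
  proof
    assume "partition_feasible n a"
    then obtain S1 S2 where S: "S1 \<union> S2 = {1..n}" "S1 \<inter> S2 = {}"
      "(\<Sum>i\<in>S1. a i) = (\<Sum>i\<in>S2. a i)"
      unfolding partition_feasible_def by blast
    define x :: "nat \<Rightarrow> real" where "x i = (if i \<in> S1 then 1 else -1)" for i
    have "(\<Sum>i=1..n. x i^2) = (\<Sum>i=1..n. 1)" by (rule sum.cong) (auto simp: x_def)
    then have x2: "(\<Sum>i=1..n. x i^2) = real n" by simp
    have "(\<Sum>i=1..n. x i^4) = (\<Sum>i=1..n. 1)" by (rule sum.cong) (auto simp: x_def)
    then have x4: "(\<Sum>i=1..n. x i^4) = real n" by simp
    have s1: "{i\<in>{1..n}. i \<in> S1} = S1" using S by auto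
    have s2: "{i\<in>{1..n}. i \<notin> S1} = S2" using S by auto
    have "(\<Sum>i=1..n. a i * (if i \<in> S1 then 1 else -1)) = 0"
      using sum_split_sign[where n=n and a=a and P="\<lambda>i. i \<in> S1"] s1 s2 S(3) by simp
    then have L0: "(\<Sum>i=1..n. of_int (a i) * x i) = 0"
    proof -
      assume h: "(\<Sum>i=1..n. a i * (if i \<in> S1 then 1 else -1)) = 0"
      have "(\<Sum>i=1..n. of_int (a i) * x i) = real_of_int (\<Sum>i=1..n. a i * (if i \<in> S1 then 1 else -1))"
        unfolding of_int_sum by (rule sum.cong) (auto simp: x_def)
      then show ?thesis using h by (metis of_int_0)
    qed
    have "qh n a eps x = - eps"
      unfolding qh_def Let_def x2 x4 L0 using assms(1) by (simp add: algebra_simps)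
    then show False using eps(1) eps(2)[of x] by linarith
  qed
qed

end
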